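(* Let $F$ be a field. If $M$ and $M'$ are nonzero Puiseux monoids such that $F[M]$ and $F[M']$ are both half-factorial, then $F[M]\cong F[M']\cong F[X]$ as $F$-algebras.
   Context: A Puiseux monoid is an additive submonoid of $(\mathbb{Q}_{\ge 0},+)$. $F[M]$ denotes the semigroup algebra of $M$ over $F$ (finite formal sums $\sum_{s\in M} f(s)X^s$ with $X^sX^t=X^{s+t}$). An integral domain is half-factorial if it is atomic (every nonzero nonunit is a finite product of irreducibles) and any two such factorizations of the same element have the same number of factors. *)

theory Defs
  imports "HOL-Computational_Algebra.Polynomial" "HOL-Algebra.Algebra"
begin

definition puiseux_monoid :: "rat set \<Rightarrow> bool" where
  "puiseux_monoid M \<longleftrightarrow> M \<subseteq> {q. 0 \<le> q} \<and> 0 \<in> M \<and> (\<forall>a\<in>M. \<forall>b\<in>M. a + b \<in> M)"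

definition supp_fun :: "(rat \<Rightarrow> 'a::zero) \<Rightarrow> rat set" where
  "supp_fun f = {s. f s \<noteq> 0}"

(* The semigroup (monoid) algebra F[M]: elements are finitely supported
   f : Q -> F with support in M, standing for sum_{s in M} f(s) X^s;
   multiplication is the convolution induced by X^s X^t = X^(s+t). *)
definition monoid_algebra :: "rat set \<Rightarrow> (rat \<Rightarrow> 'a::field) ring" where
  "monoid_algebra M =
    \<lparr> carrier = {f. finite (supp_fun f) \<and> supp_fun f \<subseteq> M},
      mult = (\<lambda>f g u. \<Sum>s\<in>supp_fun f. f s * g (u - s)),
      one = (\<lambda>s. if s = 0 then 1 else 0),
      ring.zero = (\<lambda>s. 0),
      ring.add = (\<lambda>f g s. f s + g s) \<rparr>"

definition ma_const :: "'a::field \<Rightarrow> (rat \<Rightarrow> 'a)" where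
  "ma_const c = (\<lambda>s. if s = 0 then c else 0)"

definition poly_ring :: "('a::field) poly ring" where
  "poly_ring = \<lparr> carrier = UNIV, mult = (*), one = 1, ring.zero = 0, ring.add = (+) \<rparr>"

definition atomic_domain :: "('a, 'b) ring_scheme \<Rightarrow> bool" where
  "atomic_domain R \<longleftrightarrow> domain R \<and>
     (\<forall>a\<in>carrier R. a \<noteq> \<zero>\<^bsub>R\<^esub> \<and> a \<notin> Units R \<longrightarrow>
        (\<exists>fs. set fs \<subseteq> carrier R \<and> (\<forall>x\<in>set fs. ring_irreducible\<^bsub>R\<^esub> x)
              \<and> foldr (\<otimes>\<^bsub>R\<^esub>) fs \<one>\<^bsub>R\<^esub> = a))"

definition half_factorial :: "('a, 'b) ring_scheme \<Rightarrow> bool" where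
  "half_factorial R \<longleftrightarrow> atomic_domain R \<and>
     (\<forall>fs gs. set fs \<subseteq> carrier R \<and> set gs \<subseteq> carrier R
        \<and> (\<forall>x\<in>set fs. ring_irreducible\<^bsub>R\<^esub> x) \<and> (\<forall>x\<in>set gs. ring_irreducible\<^bsub>R\<^esub> x)
        \<and> foldr (\<otimes>\<^bsub>R\<^esub>) fs \<one>\<^bsub>R\<^esub> = foldr (\<otimes>\<^bsub>R\<^esub>) gs \<one>\<^bsub>R\<^esub>
        \<longrightarrow> length fs = length gs)"

(* Isomorphism of F-algebras: a ring isomorphism that is the identity on F
   (i.e. maps each constant c to the constant c); F-linearity follows. *)
definition alg_iso_MM :: "rat set \<Rightarrow> rat set \<Rightarrow> ((rat \<Rightarrow> 'a::field) \<Rightarrow> (rat \<Rightarrow> 'a)) set" where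
  "alg_iso_MM M M' = {h. h \<in> ring_iso (monoid_algebra M) (monoid_algebra M')
                         \<and> (\<forall>c. h (ma_const c) = ma_const c)}"

definition alg_iso_MX :: "rat set \<Rightarrow> ((rat \<Rightarrow> 'a::field) \<Rightarrow> 'a poly) set" where
  "alg_iso_MX M = {h. h \<in> ring_iso (monoid_algebra M) poly_ring
                         \<and> (\<forall>c. h (ma_const c) = [:c:])}"

end

theory Submission
  imports Defs
begin


definition conv :: "(rat \<Rightarrow> 'a::field) \<Rightarrow> (rat \<Rightarrow> 'a) \<Rightarrow> rat \<Rightarrow> 'a" where
  "conv f g = (\<lambda>u. \<Sum>s\<in>supp_fun f. f s * g (u - s))"

definition mono :: "'a::field \<Rightarrow> rat \<Rightarrow> rat \<Rightarrow> 'a" where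
  "mono c a = (\<lambda>s. if s = a then c else 0)"

lemma ma_carrier:
  "carrier (monoid_algebra M) = {f. finite (supp_fun f) \<and> supp_fun f \<subseteq> M}"
  by (auto simp: monoid_algebra_def)

lemma ma_mult_fun: "(\<otimes>\<^bsub>monoid_algebra M\<^esub>) = conv"
  by (simp add: monoid_algebra_def fun_eq_iff conv_def)

lemma ma_simps0:
  "f \<otimes>\<^bsub>monoid_algebra M\<^esub> g = conv f g"
  "\<one>\<^bsub>monoid_algebra M\<^esub> = mono 1 0"
  "\<zero>\<^bsub>monoid_algebra M\<^esub> = (\<lambda>s. 0)"
  "f \<oplus>\<^bsub>monoid_algebra M\<^esub> g = (\<lambda>s. f s + g s)"
  by (auto simp: monoid_algebra_def conv_def mono_def)

lemmas ma_simps = ma_mult_fun ma_simps0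

lemma supp_mono: "supp_fun (mono c a) = (if c = 0 then {} else {a})"
  by (auto simp: supp_fun_def mono_def)

lemma conv_mono: "conv (mono c a) (mono d b) = mono (c*d) (a+b)"
  by (cases "c = 0"; simp add: conv_def supp_mono; auto simp: mono_def fun_eq_iff)

lemma mono_eq_iff: "c \<noteq> 0 \<Longrightarrow> mono c a = mono d b \<longleftrightarrow> c = d \<and> a = b"
  by (auto simp: mono_def fun_eq_iff)

lemma conv_top:
  assumes "finite (supp_fun f)" "finite (supp_fun g)" "supp_fun f \<noteq> {}" "supp_fun g \<noteq> {}"
  shows "conv f g (Max (supp_fun f) + Max (supp_fun g)) = f (Max (supp_fun f)) * g (Max (supp_fun g))"
proof -
  let ?A = "Max (supp_fun f)" and ?B = "Max (supp_fun g)"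
  have A: "?A \<in> supp_fun f" using assms by simp
  have z: "f s * g (?A + ?B - s) = 0" if "s \<in> supp_fun f - {?A}" for s
  proof -
    have "s \<le> ?A" using that assms by simp
    then have "s < ?A" using that by auto
    then have "?A + ?B - s > ?B" by simp
    then have "?A + ?B - s \<notin> supp_fun g" using assms Max_ge by fastforce
    then show ?thesis by (simp add: supp_fun_def)
  qed
  have "conv f g (?A + ?B) = f ?A * g (?A + ?B - ?A) + (\<Sum>s\<in>supp_fun f - {?A}. f s * g (?A + ?B - s))"
    unfolding conv_def using sum.remove[OF assms(1) A, of "\<lambda>s. f s * g (?A + ?B - s)"] by simp
  also have "\<dots> = f ?A * g ?B" using z by (simp add: sum.neutral)
  finally show ?thesis .
qed

lemma conv_bot:
  assumes "finite (supp_fun f)" "finite (supp_fun g)" "supp_fun f \<noteq> {}" "supp_fun g \<noteq> {}"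
  shows "conv f g (Min (supp_fun f) + Min (supp_fun g)) = f (Min (supp_fun f)) * g (Min (supp_fun g))"
proof -
  let ?A = "Min (supp_fun f)" and ?B = "Min (supp_fun g)"
  have A: "?A \<in> supp_fun f" using assms by simp
  have z: "f s * g (?A + ?B - s) = 0" if "s \<in> supp_fun f - {?A}" for s
  proof -
    have "s \<ge> ?A" using that assms by simp
    then have "s > ?A" using that by auto
    then have "?A + ?B - s < ?B" by simp
    then have "?A + ?B - s \<notin> supp_fun g" using assms Min_le by fastforce
    then show ?thesis by (simp add: supp_fun_def)
  qed
  have "conv f g (?A + ?B) = f ?A * g (?A + ?B - ?A) + (\<Sum>s\<in>supp_fun f - {?A}. f s * g (?A + ?B - s))"
    unfolding conv_def using sum.remove[OF assms(1) A, of "\<lambda>s. f s * g (?A + ?B - s)"] by simp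
  also have "\<dots> = f ?A * g ?B" using z by (simp add: sum.neutral)
  finally show ?thesis .
qed

lemma single_supp:
  assumes "finite (supp_fun f)" "supp_fun f \<noteq> {}" "Min (supp_fun f) = Max (supp_fun f)"
  shows "f = mono (f (Max (supp_fun f))) (Max (supp_fun f))"
proof -
  have "s = Max (supp_fun f)" if "s \<in> supp_fun f" for s
  proof -
    have "Min (supp_fun f) \<le> s" "s \<le> Max (supp_fun f)" using that assms(1) by auto
    then show ?thesis using assms(3) by simp
  qed
  then show ?thesis by (auto simp: mono_def fun_eq_iff supp_fun_def)
qed

lemma mono_factor:
  assumes "finite (supp_fun f)" "finite (supp_fun g)" "conv f g = mono c m" "c \<noteq> 0"
  shows "\<exists>d a. d \<noteq> 0 \<and> f = mono d a" "\<exists>d a. d \<noteq> 0 \<and> g = mono d a"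
proof -
  have nf: "supp_fun f \<noteq> {}"
  proof
    assume "supp_fun f = {}"
    then have "conv f g m = 0" by (simp add: conv_def)
    then show False using assms by (simp add: mono_def)
  qed
  have ng: "supp_fun g \<noteq> {}"
  proof
    assume e: "supp_fun g = {}"
    then have "g x = 0" for x by (simp add: supp_fun_def)
    then have "conv f g m = 0" by (simp add: conv_def)
    then show False using assms by (simp add: mono_def)
  qed
  let ?Af = "Max (supp_fun f)" and ?Ag = "Max (supp_fun g)"
  let ?af = "Min (supp_fun f)" and ?ag = "Min (supp_fun g)"
  have fA: "f ?Af \<noteq> 0" "g ?Ag \<noteq> 0" "f ?af \<noteq> 0" "g ?ag \<noteq> 0"
    using nf ng assms Max_in Min_in by (auto simp: supp_fun_def)
  have "conv f g (?Af + ?Ag) \<noteq> 0" using conv_top[OF assms(1,2) nf ng] fA by simp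
  then have 1: "?Af + ?Ag = m" using assms(3) by (auto simp: mono_def split: if_splits)
  have "conv f g (?af + ?ag) \<noteq> 0" using conv_bot[OF assms(1,2) nf ng] fA by simp
  then have 2: "?af + ?ag = m" using assms(3) by (auto simp: mono_def split: if_splits)
  have "?af \<le> ?Af" "?ag \<le> ?Ag" using nf ng assms(1,2) by auto
  then have "?af = ?Af" "?ag = ?Ag" using 1 2 by linarith+
  then show "\<exists>d a. d \<noteq> 0 \<and> f = mono d a" "\<exists>d a. d \<noteq> 0 \<and> g = mono d a"
    using single_supp[OF assms(1) nf] single_supp[OF assms(2) ng] fA by blast+
qed


definition atom :: "rat set \<Rightarrow> rat \<Rightarrow> bool" where
  "atom M a \<longleftrightarrow> a \<in> M \<and> a \<noteq> 0 \<and> (\<forall>b\<in>M. \<forall>c\<in>M. a = b + c \<longrightarrow> b = 0 \<or> c = 0)"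

lemma carrier_mono: "mono d a \<in> carrier (monoid_algebra M) \<longleftrightarrow> d = 0 \<or> a \<in> M"
  by (auto simp: ma_carrier supp_mono)

lemma units_mono:
  fixes x :: "rat \<Rightarrow> 'a::field"
  assumes pm: "puiseux_monoid M" and u: "x \<in> Units (monoid_algebra M)"
  shows "\<exists>d. d \<noteq> 0 \<and> x = mono d 0"
proof -
  obtain y where y: "y \<in> carrier (monoid_algebra M)" "conv x y = mono (1::'a) 0" "x \<in> carrier (monoid_algebra M)"
    using u unfolding Units_def by (auto simp: ma_simps)
  obtain d a where da: "d \<noteq> 0" "x = mono d a" using mono_factor(1)[OF _ _ y(2)] y by (auto simp: ma_carrier)
  obtain e b where eb: "e \<noteq> 0" "y = mono e b" using mono_factor(2)[OF _ _ y(2)] y by (auto simp: ma_carrier)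
  have "mono (d*e) (a+b) = mono 1 0" using y(2) da eb conv_mono by metis
  then have "a + b = 0" using da eb mono_eq_iff[of "d*e"] by simp
  moreover have "a \<in> M" "b \<in> M" using y(1,3) da eb carrier_mono by metis+
  ultimately have "a \<ge> 0" "b \<ge> 0" using pm unfolding puiseux_monoid_def by auto
  with \<open>a + b = 0\<close> have "a = 0" by linarith
  then show ?thesis using da by blast
qed

lemma mono_unit:
  assumes pm: "puiseux_monoid M" and d: "(d::'a::field) \<noteq> 0"
  shows "mono d 0 \<in> Units (monoid_algebra M)"
proof -
  have "0 \<in> M" using pm by (simp add: puiseux_monoid_def)
  then have "mono d 0 \<in> carrier (monoid_algebra M)" "mono (1/d) 0 \<in> carrier (monoid_algebra M)"
    by (simp_all add: carrier_mono)
  moreover have "conv (mono (1/d) 0) (mono d 0) = mono 1 0" "conv (mono d 0) (mono (1/d) 0) = mono 1 0"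
    using d by (simp_all add: conv_mono)
  ultimately show ?thesis unfolding Units_def ma_simps by blast
qed

lemma unit_iff_mono:
  fixes d :: "'a::field"
  assumes pm: "puiseux_monoid M" and d: "d \<noteq> 0"
  shows "mono d a \<in> Units (monoid_algebra M) \<longleftrightarrow> a = 0"
  using units_mono[OF pm, of "mono d a"] mono_unit[OF pm d] mono_eq_iff[OF d] by auto

lemma irr_atom:
  fixes d :: "'a::field"
  assumes pm: "puiseux_monoid M" and dom: "domain (monoid_algebra M :: (rat \<Rightarrow> 'a) ring)"
    and x: "mono d a \<in> carrier (monoid_algebra M)" "ring_irreducible\<^bsub>monoid_algebra M\<^esub> (mono d a)"
    and d: "d \<noteq> 0"
  shows "atom M a"
proof -
  note E = domain.ring_irreducibleE[OF dom x]
  have aM: "a \<in> M" using x(1) d carrier_mono by metis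
  have a0: "a \<noteq> 0" using E(4) unit_iff_mono[OF pm d] by auto
  have "b = 0 \<or> c = 0" if "b \<in> M" "c \<in> M" "a = b + c" for b c
  proof -
    have "mono d a = mono d b \<otimes>\<^bsub>monoid_algebra M\<^esub> mono 1 c"
      using that by (simp add: ma_simps conv_mono)
    then have "mono d b \<in> Units (monoid_algebra M) \<or> mono (1::'a) c \<in> Units (monoid_algebra M)"
      using E(5) that carrier_mono by metis
    then show ?thesis using unit_iff_mono[OF pm d] unit_iff_mono[OF pm, of "1::'a"] by auto
  qed
  then show ?thesis using aM a0 by (auto simp: atom_def)
qed

lemma atom_irr:
  assumes pm: "puiseux_monoid M" and dom: "domain (monoid_algebra M :: (rat \<Rightarrow> 'a::field) ring)"
    and a: "atom M a"
  shows "ring_irreducible\<^bsub>monoid_algebra M\<^esub> (mono (1::'a) a)"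
proof (rule domain.ring_irreducibleI[OF dom])
  show "mono (1::'a) a \<in> carrier (monoid_algebra M) - {\<zero>\<^bsub>monoid_algebra M\<^esub>}"
    using a by (simp add: atom_def carrier_mono ma_simps) (auto simp: mono_def fun_eq_iff)
  show "mono (1::'a) a \<notin> Units (monoid_algebra M)"
    using a unit_iff_mono[OF pm, of "1::'a"] by (auto simp: atom_def)
  fix x y :: "rat \<Rightarrow> 'a" assume xy: "x \<in> carrier (monoid_algebra M)" "y \<in> carrier (monoid_algebra M)"
    "mono 1 a = x \<otimes>\<^bsub>monoid_algebra M\<^esub> y"
  then have c: "conv x y = mono (1::'a) a" by (simp add: ma_simps)
  obtain d b where db: "d \<noteq> 0" "x = mono d b" using mono_factor(1)[OF _ _ c] xy by (auto simp: ma_carrier)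
  obtain e cc where ec: "e \<noteq> 0" "y = mono e cc" using mono_factor(2)[OF _ _ c] xy by (auto simp: ma_carrier)
  have "mono (d*e) (b + cc) = mono 1 a" using c db ec conv_mono by metis
  then have "a = b + cc" using db ec mono_eq_iff[of "d*e"] by simp
  moreover have "b \<in> M" "cc \<in> M" using xy db ec carrier_mono by metis+
  ultimately have "b = 0 \<or> cc = 0" using a by (auto simp: atom_def)
  then show "x \<in> Units (monoid_algebra M) \<or> y \<in> Units (monoid_algebra M)"
    using db ec unit_iff_mono[OF pm] by auto
qed

lemma foldr_closed:
  assumes dom: "domain (monoid_algebra M :: (rat \<Rightarrow> 'a::field) ring)"
    and "set fs \<subseteq> carrier (monoid_algebra M :: (rat \<Rightarrow> 'a::field) ring)"
  shows "foldr (\<otimes>\<^bsub>monoid_algebra M\<^esub>) fs \<one>\<^bsub>monoid_algebra M\<^esub> \<in> carrier (monoid_algebra M)"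
  using assms(2) by (induction fs) (auto intro: domain.axioms(1)[OF dom, THEN cring.axioms(1), THEN ring.axioms(2), THEN monoid.m_closed] domain.axioms(1)[OF dom, THEN cring.axioms(1), THEN ring.axioms(2), THEN monoid.one_closed])


lemma foldr_monos:
  fixes fs :: "(rat \<Rightarrow> 'a::field) list"
  assumes dom: "domain (monoid_algebra M :: (rat \<Rightarrow> 'a::field) ring)"
  shows "set fs \<subseteq> carrier (monoid_algebra M) \<Longrightarrow>
    foldr (\<otimes>\<^bsub>monoid_algebra M\<^esub>) fs \<one>\<^bsub>monoid_algebra M\<^esub> = mono c m \<Longrightarrow> c \<noteq> 0 \<Longrightarrow>
    \<forall>x\<in>set fs. \<exists>d a. d \<noteq> 0 \<and> x = mono d a"
proof (induction fs arbitrary: c m)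
  case Nil then show ?case by simp
next
  case (Cons x xs)
  have cl: "foldr (\<otimes>\<^bsub>monoid_algebra M\<^esub>) xs \<one>\<^bsub>monoid_algebra M\<^esub> \<in> carrier (monoid_algebra M)"
    using foldr_closed[OF dom] Cons.prems by auto
  have c: "conv x (foldr (\<otimes>\<^bsub>monoid_algebra M\<^esub>) xs \<one>\<^bsub>monoid_algebra M\<^esub>) = mono c m"
    using Cons.prems by (simp add: ma_simps)
  have x: "finite (supp_fun x)" using Cons.prems by (auto simp: ma_carrier)
  have r: "finite (supp_fun (foldr (\<otimes>\<^bsub>monoid_algebra M\<^esub>) xs \<one>\<^bsub>monoid_algebra M\<^esub>))"
    using cl by (auto simp: ma_carrier)
  obtain e b where eb: "e \<noteq> 0" "foldr (\<otimes>\<^bsub>monoid_algebra M\<^esub>) xs \<one>\<^bsub>monoid_algebra M\<^esub> = mono e b"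
    using mono_factor(2)[OF x r c Cons.prems(3)] by blast
  have "\<forall>x\<in>set xs. \<exists>d a. d \<noteq> 0 \<and> x = mono d a"
    using Cons.IH[OF _ eb(2) eb(1)] Cons.prems by auto
  then show ?case using mono_factor(1)[OF x r c Cons.prems(3)] by auto
qed

lemma foldr_same:
  fixes fs :: "(rat \<Rightarrow> 'a::field) list"
  shows "(\<forall>x\<in>set fs. \<exists>d. d \<noteq> 0 \<and> x = mono d a) \<Longrightarrow>
    \<exists>e. e \<noteq> 0 \<and> foldr (\<otimes>\<^bsub>monoid_algebra M\<^esub>) fs \<one>\<^bsub>monoid_algebra M\<^esub> = mono e (of_nat (length fs) * a)"
proof (induction fs)
  case Nil then show ?case by (simp add: ma_simps) (rule exI[of _ 1], simp)
next
  case (Cons x xs)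
  obtain e where e: "e \<noteq> 0" "foldr (\<otimes>\<^bsub>monoid_algebra M\<^esub>) xs \<one>\<^bsub>monoid_algebra M\<^esub> = mono e (of_nat (length xs) * a)"
    using Cons by auto
  obtain d where d: "d \<noteq> 0" "x = mono d a" using Cons.prems by auto
  show ?case using e d by (auto simp: ma_simps conv_mono algebra_simps intro!: exI[of _ "d*e"])
qed

lemma foldr_rep:
  "foldr (\<otimes>\<^bsub>monoid_algebra M\<^esub>) (replicate k (mono (1::'a::field) a)) \<one>\<^bsub>monoid_algebra M\<^esub> = mono 1 (of_nat k * a)"
  by (induction k) (auto simp: ma_simps conv_mono algebra_simps)

lemma hf_cyclic:
  fixes M :: "rat set"
  assumes pm: "puiseux_monoid M" and M0: "M \<noteq> {0}"
    and hf: "half_factorial (monoid_algebra M :: (rat \<Rightarrow> 'a::field) ring)"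
  shows "\<exists>a>0. M = range (\<lambda>n. of_nat n * a)"
proof -
  let ?R = "monoid_algebra M :: (rat \<Rightarrow> 'a) ring"
  have dom: "domain ?R" and at: "atomic_domain ?R" using hf by (auto simp: half_factorial_def atomic_domain_def)
  have nonneg: "x \<in> M \<Longrightarrow> x \<ge> 0" for x using pm by (auto simp: puiseux_monoid_def)
  have zM: "0 \<in> M" using pm by (auto simp: puiseux_monoid_def)
  have fact: "\<exists>fs. set fs \<subseteq> carrier ?R \<and> (\<forall>x\<in>set fs. \<exists>d a. d \<noteq> 0 \<and> x = mono d a \<and> atom M a)
      \<and> foldr (\<otimes>\<^bsub>?R\<^esub>) fs \<one>\<^bsub>?R\<^esub> = mono 1 m" if m: "m \<in> M" "m \<noteq> 0" for m
  proof -
    have "mono (1::'a) m \<in> carrier ?R" "mono (1::'a) m \<noteq> \<zero>\<^bsub>?R\<^esub>" "mono (1::'a) m \<notin> Units ?R"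
      using m carrier_mono unit_iff_mono[OF pm, of "1::'a"]
      by (auto simp: ma_simps mono_def fun_eq_iff)
    then obtain fs where fs: "set fs \<subseteq> carrier ?R" "\<forall>x\<in>set fs. ring_irreducible\<^bsub>?R\<^esub> x"
      "foldr (\<otimes>\<^bsub>?R\<^esub>) fs \<one>\<^bsub>?R\<^esub> = mono 1 m"
      using at unfolding atomic_domain_def by blast
    have "\<forall>x\<in>set fs. \<exists>d a. d \<noteq> 0 \<and> x = mono d a" using foldr_monos[OF dom fs(1,3)] by simp
    then have "\<forall>x\<in>set fs. \<exists>d a. d \<noteq> 0 \<and> x = mono d a \<and> atom M a"
    proof (intro ballI)
      fix x assume x: "x \<in> set fs" and al: "\<forall>x\<in>set fs. \<exists>d a. d \<noteq> 0 \<and> x = mono d a"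
      then obtain d a where da: "d \<noteq> 0" "x = mono d a" by blast
      then have "atom M a" using irr_atom[OF pm dom, of d a] fs(1,2) x by blast
      then show "\<exists>d a. d \<noteq> 0 \<and> x = mono d a \<and> atom M a" using da by blast
    qed
    then show ?thesis using fs by blast
  qed
  obtain m where m: "m \<in> M" "m \<noteq> 0" using M0 zM by blast
  obtain fs where fs: "set fs \<subseteq> carrier ?R" "\<forall>x\<in>set fs. \<exists>d a. d \<noteq> 0 \<and> x = mono d a \<and> atom M a"
      "foldr (\<otimes>\<^bsub>?R\<^esub>) fs \<one>\<^bsub>?R\<^esub> = mono 1 m" using fact[OF m] by blast
  have "fs \<noteq> []" using fs(3) m(2) by (auto simp: ma_simps mono_eq_iff)
  then obtain a where a: "atom M a" using fs(2) by (cases fs) auto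
  have apos: "a > 0" using a nonneg by (force simp: atom_def)
  have uniq: "b = a" if b: "atom M b" for b
  proof -
    have bpos: "b > 0" using b nonneg by (force simp: atom_def)
    obtain k n where kn: "quotient_of (b / a) = (k, n)" by (cases "quotient_of (b / a)")
    have "b / a = of_int k / of_int n" "n > 0" using kn quotient_of_div quotient_of_denom_pos by blast+
    moreover have "b / a > 0" using apos bpos by simp
    ultimately have k: "k > 0" by (simp add: zero_less_divide_iff)
    have eq: "of_int n * b = of_int k * a" using \<open>b / a = _\<close> \<open>n > 0\<close> apos
      by (simp add: field_simps)
    let ?fs = "replicate (nat k) (mono (1::'a) a)" and ?gs = "replicate (nat n) (mono (1::'a) b)"
    have "foldr (\<otimes>\<^bsub>?R\<^esub>) ?fs \<one>\<^bsub>?R\<^esub> = foldr (\<otimes>\<^bsub>?R\<^esub>) ?gs \<one>\<^bsub>?R\<^esub>"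
      unfolding foldr_rep using eq k \<open>n > 0\<close> by (simp add: of_nat_nat)
    moreover have "set ?fs \<subseteq> carrier ?R" "set ?gs \<subseteq> carrier ?R"
      using a b by (auto simp: atom_def carrier_mono)
    moreover have "\<forall>x\<in>set ?fs. ring_irreducible\<^bsub>?R\<^esub> x" "\<forall>x\<in>set ?gs. ring_irreducible\<^bsub>?R\<^esub> x"
      using atom_irr[OF pm dom a] atom_irr[OF pm dom b] by auto
    ultimately have "length ?fs = length ?gs" using hf unfolding half_factorial_def by blast
    then have "k = n" using k \<open>n > 0\<close> by simp
    then show ?thesis using eq \<open>n > 0\<close> by simp
  qed
  have "M = range (\<lambda>n. of_nat n * a)"
  proof
    show "range (\<lambda>n. of_nat n * a) \<subseteq> M"
    proof
      fix x assume "x \<in> range (\<lambda>n. of_nat n * a)"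
      then obtain n where x: "x = of_nat n * a" by auto
      have "of_nat n * a \<in> M" for n
        by (induction n) (use zM a pm in \<open>auto simp: atom_def puiseux_monoid_def algebra_simps\<close>)
      then show "x \<in> M" using x by simp
    qed
    show "M \<subseteq> range (\<lambda>n. of_nat n * a)"
    proof
      fix x assume x: "x \<in> M"
      show "x \<in> range (\<lambda>n. of_nat n * a)"
      proof (cases "x = 0")
        case True then show ?thesis by (auto intro: image_eqI[of _ _ 0])
      next
        case False
        obtain gs where gs: "set gs \<subseteq> carrier ?R" "\<forall>x\<in>set gs. \<exists>d a. d \<noteq> 0 \<and> x = mono d a \<and> atom M a"
          "foldr (\<otimes>\<^bsub>?R\<^esub>) gs \<one>\<^bsub>?R\<^esub> = mono 1 x" using fact[OF x False] by blast
        have "\<forall>y\<in>set gs. \<exists>d. d \<noteq> 0 \<and> y = mono d a" using gs(2) uniq by blast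
        then obtain e where "e \<noteq> 0" "foldr (\<otimes>\<^bsub>?R\<^esub>) gs \<one>\<^bsub>?R\<^esub> = mono e (of_nat (length gs) * a)"
          using foldr_same by blast
        then have "x = of_nat (length gs) * a" using gs(3) mono_eq_iff by metis
        then show ?thesis by blast
      qed
    qed
  qed
  then show ?thesis using apos by blast
qed



definition phi :: "rat \<Rightarrow> (rat \<Rightarrow> 'a::field) \<Rightarrow> 'a poly" where
  "phi a f = Abs_poly (\<lambda>n. f (of_nat n * a))"

lemma coeff_phi:
  assumes "finite (supp_fun f)" "a > 0"
  shows "Polynomial.coeff (phi a f) = (\<lambda>n. f (of_nat n * a))"
proof -
  have inj: "inj (\<lambda>n::nat. of_nat n * a)" using assms(2) by (auto simp: inj_def)
  have "finite ((\<lambda>n::nat. of_nat n * a) -` supp_fun f)"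
    using finite_vimageI[OF assms(1) inj] .
  then obtain N where N: "\<forall>i\<in>(\<lambda>n::nat. of_nat n * a) -` supp_fun f. i < N"
    by (auto simp: finite_nat_set_iff_bounded)
  have "f (of_nat i * a) = 0" if "i > N" for i
    using N that by (auto simp: supp_fun_def)
  then show ?thesis unfolding phi_def by (rule coeff_Abs_poly)
qed

lemma lattice_neg:
  assumes "M = range (\<lambda>n. of_nat n * a)" "a > 0" "f \<in> carrier (monoid_algebra M)" "x < 0"
  shows "f x = 0"
proof -
  have "x \<notin> M"
  proof
    assume "x \<in> M"
    then obtain n where "x = of_nat n * a" using assms(1) by blast
    moreover have "of_nat n * a \<ge> 0" using assms(2) by simp
    ultimately show False using assms(4) by simp
  qed
  then show ?thesis using assms(3) by (auto simp: ma_carrier supp_fun_def)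
qed

lemma phi_mult:
  assumes M: "M = range (\<lambda>n. of_nat n * a)" and a: "a > 0"
    and f: "f \<in> carrier (monoid_algebra M)" and g: "g \<in> carrier (monoid_algebra M)"
  shows "phi a (conv f g) = phi a f * phi a (g :: rat \<Rightarrow> 'a::field)"
proof -
  have ff: "finite (supp_fun f)" "finite (supp_fun g)" "supp_fun f \<subseteq> M"
    using f g by (auto simp: ma_carrier)
  have fc: "finite (supp_fun (conv f g))"
  proof -
    have "supp_fun (conv f g) \<subseteq> (\<lambda>(s,t). s + t) ` (supp_fun f \<times> supp_fun g)"
    proof
      fix u assume "u \<in> supp_fun (conv f g)"
      then have "(\<Sum>s\<in>supp_fun f. f s * g (u - s)) \<noteq> 0" by (simp add: supp_fun_def conv_def)
      then obtain s where s: "s \<in> supp_fun f" "f s * g (u - s) \<noteq> 0" by (meson sum.neutral)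
      then have "(s, u - s) \<in> supp_fun f \<times> supp_fun g" by (auto simp: supp_fun_def)
      then show "u \<in> (\<lambda>(s,t). s + t) ` (supp_fun f \<times> supp_fun g)" by (auto intro: image_eqI[of _ _ "(s, u-s)"])
    qed
    moreover have "finite ((\<lambda>(s,t). s + t) ` (supp_fun f \<times> supp_fun g))"
      using ff by simp
    ultimately show ?thesis by (rule finite_subset)
  qed
  let ?e = "\<lambda>n::nat. of_nat n * a"
  have inj: "inj ?e" using a by (auto simp: inj_def)
  show ?thesis
  proof (rule Polynomial.poly_eqI)
    fix k
    let ?I = "{i. f (?e i) \<noteq> 0}"
    have sI: "supp_fun f = ?e ` ?I" using ff(3) M by (auto simp: supp_fun_def)
    have fI: "finite ?I" using finite_vimageI[OF ff(1) inj] by (simp add: supp_fun_def vimage_def)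
    let ?F = "\<lambda>i. f (?e i) * g (?e k - ?e i)"
    have "Polynomial.coeff (phi a (conv f g)) k = (\<Sum>s\<in>supp_fun f. f s * g (?e k - s))"
      using coeff_phi[OF fc a] by (simp add: conv_def)
    also have "\<dots> = (\<Sum>i\<in>?I. ?F i)"
    proof -
      have ij: "inj_on ?e ?I" using inj by (simp add: inj_on_def inj_def)
      show ?thesis unfolding sI sum.reindex[OF ij] comp_def ..
    qed
    also have "\<dots> = (\<Sum>i\<in>?I \<union> {..k}. ?F i)"
    proof (rule sum.mono_neutral_left)
      show "\<forall>i\<in>?I \<union> {..k} - ?I. ?F i = 0" by auto
    qed (use fI in auto)
    also have "\<dots> = (\<Sum>i\<in>{..k}. ?F i)"
    proof (rule sum.mono_neutral_right)
      show "\<forall>i\<in>?I \<union> {..k} - {..k}. ?F i = 0"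
      proof
        fix i assume "i \<in> ?I \<union> {..k} - {..k}"
        then have "i > k" by auto
        then have "?e k - ?e i < 0" using a by (simp add: mult_strict_right_mono)
        then show "?F i = 0" using lattice_neg[OF M a g] by simp
      qed
    qed (use fI in auto)
    also have "\<dots> = (\<Sum>i\<le>k. Polynomial.coeff (phi a f) i * Polynomial.coeff (phi a g) (k - i))"
      unfolding coeff_phi[OF ff(1) a] coeff_phi[OF ff(2) a]
    proof (rule sum.cong[OF refl])
      fix i assume "i \<in> {..k}"
      then have "of_nat (k - i) * a = of_nat k * a - of_nat i * a"
        by (simp add: of_nat_diff left_diff_distrib)
      then show "?F i = f (of_nat i * a) * g (of_nat (k - i) * a)" by simp
    qed
    also have "\<dots> = Polynomial.coeff (phi a f * phi a g) k" by (simp add: Polynomial.coeff_mult)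
    finally show "Polynomial.coeff (phi a (conv f g)) k = Polynomial.coeff (phi a f * phi a g) k" .
  qed
qed



lemma phi_surj:
  assumes M: "M = range (\<lambda>n. of_nat n * a)" and a: "a > 0"
  shows "(p :: 'a::field poly) \<in> phi a ` carrier (monoid_algebra M)"
proof -
  let ?e = "\<lambda>n::nat. of_nat n * a"
  define f :: "rat \<Rightarrow> 'a" where "f = (\<lambda>s. if s \<in> M then Polynomial.coeff p (nat \<lfloor>s / a\<rfloor>) else 0)"
  have fe: "f (?e n) = Polynomial.coeff p n" for n
  proof -
    have "?e n \<in> M" using M by blast
    moreover have "?e n / a = of_nat n" using a by simp
    ultimately show ?thesis unfolding f_def by simp
  qed
  have sub: "supp_fun f \<subseteq> ?e ` {..Polynomial.degree p}"
  proof
    fix s assume s: "s \<in> supp_fun f"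
    then have "s \<in> M" unfolding supp_fun_def f_def by (auto split: if_splits)
    then obtain n where n: "s = ?e n" using M by blast
    then have "Polynomial.coeff p n \<noteq> 0" using s fe unfolding supp_fun_def by simp
    then have "n \<le> Polynomial.degree p" by (rule Polynomial.le_degree)
    then show "s \<in> ?e ` {..Polynomial.degree p}" using n by blast
  qed
  have ff: "finite (supp_fun f)" by (rule finite_subset[OF sub]) simp
  have "supp_fun f \<subseteq> M" unfolding supp_fun_def f_def by (auto split: if_splits)
  then have fc: "f \<in> carrier (monoid_algebra M)" using ff by (simp add: ma_carrier)
  have "Polynomial.coeff (phi a f) = Polynomial.coeff p" unfolding coeff_phi[OF ff a] using fe by (simp add: fun_eq_iff)
  then have "phi a f = p" by (simp add: Polynomial.coeff_inject)
  then show ?thesis using fc by blast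
qed
lemma phi_iso:
  assumes M: "M = range (\<lambda>n. of_nat n * a)" and a: "a > 0"
  shows "(phi a :: (rat \<Rightarrow> 'a::field) \<Rightarrow> 'a poly) \<in> alg_iso_MX M"
proof -
  let ?R = "monoid_algebra M :: (rat \<Rightarrow> 'a) ring"
  let ?e = "\<lambda>n::nat. of_nat n * a"
  have inj: "inj ?e" using a by (auto simp: inj_def)
  have zM: "0 \<in> M" using M by (auto intro: image_eqI[of _ _ 0])
  have cfin: "finite (supp_fun f)" if "f \<in> carrier ?R" for f using that by (auto simp: ma_carrier)
  have hom: "phi a \<in> ring_hom ?R Defs.poly_ring"
  proof (rule ring_hom_memI)
    show "phi a x \<in> carrier Defs.poly_ring" for x by (simp add: poly_ring_def)
    show "phi a (x \<otimes>\<^bsub>?R\<^esub> y) = phi a x \<otimes>\<^bsub>Defs.poly_ring\<^esub> phi a y"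
      if "x \<in> carrier ?R" "y \<in> carrier ?R" for x y
      using phi_mult[OF M a that] by (simp add: ma_simps poly_ring_def)
    show "phi a (x \<oplus>\<^bsub>?R\<^esub> y) = phi a x \<oplus>\<^bsub>Defs.poly_ring\<^esub> phi a y"
      if "x \<in> carrier ?R" "y \<in> carrier ?R" for x y
    proof -
      have fs: "finite (supp_fun (\<lambda>s. x s + y s))"
        by (rule finite_subset[of _ "supp_fun x \<union> supp_fun y"]) (use cfin[OF that(1)] cfin[OF that(2)] in \<open>auto simp: supp_fun_def\<close>)
      have "Polynomial.coeff (phi a (\<lambda>s. x s + y s)) n = Polynomial.coeff (phi a x + phi a y) n" for n
        unfolding Polynomial.coeff_add coeff_phi[OF cfin[OF that(1)] a] coeff_phi[OF cfin[OF that(2)] a] coeff_phi[OF fs a]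
        by simp
      then show ?thesis
        by (simp add: ma_simps poly_ring_def Polynomial.poly_eq_iff)
    qed
    show "phi a \<one>\<^bsub>?R\<^esub> = \<one>\<^bsub>Defs.poly_ring\<^esub>"
    proof -
      have h: "Polynomial.coeff (phi a (mono (1::'a) 0)) = (\<lambda>n. mono 1 0 (of_nat n * a))"
        by (rule coeff_phi[OF _ a]) (simp add: supp_mono)
      have "Polynomial.coeff (phi a (mono (1::'a) 0)) n = Polynomial.coeff 1 n" for n
        using a unfolding h by (simp add: mono_def Polynomial.coeff_1)
      then show ?thesis by (simp add: ma_simps poly_ring_def Polynomial.poly_eq_iff)
    qed
  qed
  have injp: "inj_on (phi a) (carrier ?R)"
  proof
    fix f g assume f: "f \<in> carrier ?R" and g: "g \<in> carrier ?R" and eq: "phi a f = phi a g"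
    have "f (?e n) = g (?e n)" for n
    proof -
      have "Polynomial.coeff (phi a f) n = Polynomial.coeff (phi a g) n" using eq by simp
      then show ?thesis unfolding coeff_phi[OF cfin[OF f] a] coeff_phi[OF cfin[OF g] a] .
    qed
    note fg = this
    have fg0: "f s = 0" "g s = 0" if "s \<notin> M" for s
      using f g that by (auto simp: ma_carrier supp_fun_def)
    have "f s = g s" for s
    proof (cases "s \<in> M")
      case True
      then obtain n where "s = ?e n" using M by blast
      then show ?thesis using fg by simp
    next
      case False
      then show ?thesis using fg0 by simp
    qed
    then show "f = g" by (rule ext)
  qed
  have surj: "phi a ` carrier ?R = carrier Defs.poly_ring"
    using phi_surj[OF M a] by (auto simp: poly_ring_def)
  have const: "phi a (ma_const c) = [:c:]" for c :: 'a
  proof -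
    have "ma_const c = mono c 0" by (simp add: ma_const_def mono_def fun_eq_iff)
    moreover have h: "Polynomial.coeff (phi a (mono c 0)) = (\<lambda>n. mono c 0 (of_nat n * a))"
      by (rule coeff_phi[OF _ a]) (simp add: supp_mono)
    moreover have "Polynomial.coeff (phi a (mono c 0)) n = Polynomial.coeff [:c:] n" for n
      using a unfolding h by (cases n) (simp_all add: mono_def)
    ultimately show ?thesis by (simp add: Polynomial.poly_eq_iff)
  qed
  show ?thesis unfolding alg_iso_MX_def ring_iso_def bij_betw_def mem_Collect_eq
    using hom injp surj const by simp
qed



theorem mainTheorem9:
  fixes M M' :: "rat set"
  assumes "puiseux_monoid M" and "puiseux_monoid M'"
    and "M \<noteq> {0}" and "M' \<noteq> {0}"
    and "half_factorial (monoid_algebra M :: (rat \<Rightarrow> 'a::field) ring)"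
    and "half_factorial (monoid_algebra M' :: (rat \<Rightarrow> 'a) ring)"
  shows "(alg_iso_MM M M' :: ((rat \<Rightarrow> 'a) \<Rightarrow> (rat \<Rightarrow> 'a)) set) \<noteq> {}
       \<and> (alg_iso_MX M :: ((rat \<Rightarrow> 'a) \<Rightarrow> 'a poly) set) \<noteq> {}
       \<and> (alg_iso_MX M' :: ((rat \<Rightarrow> 'a) \<Rightarrow> 'a poly) set) \<noteq> {}"
proof -
  obtain a where a: "a > 0" "M = range (\<lambda>n. of_nat n * a)"
    using hf_cyclic[OF assms(1,3,5)] by blast
  obtain b where b: "b > 0" "M' = range (\<lambda>n. of_nat n * b)"
    using hf_cyclic[OF assms(2,4,6)] by blast
  have h1: "(phi a :: (rat \<Rightarrow> 'a) \<Rightarrow> 'a poly) \<in> alg_iso_MX M" using phi_iso[OF a(2,1)] .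
  have h2: "(phi b :: (rat \<Rightarrow> 'a) \<Rightarrow> 'a poly) \<in> alg_iso_MX M'" using phi_iso[OF b(2,1)] .
  let ?R' = "monoid_algebra M' :: (rat \<Rightarrow> 'a) ring"
  have ringR': "ring ?R'" using assms(6)
    by (auto simp: half_factorial_def atomic_domain_def intro: domain.axioms(1)[THEN cring.axioms(1)])
  have i1: "(phi a :: (rat \<Rightarrow> 'a) \<Rightarrow> 'a poly) \<in> ring_iso (monoid_algebra M) Defs.poly_ring" using h1 by (simp add: alg_iso_MX_def)
  have i2: "(phi b :: (rat \<Rightarrow> 'a) \<Rightarrow> 'a poly) \<in> ring_iso ?R' Defs.poly_ring" using h2 by (simp add: alg_iso_MX_def)
  let ?h = "inv_into (carrier ?R') (phi b) \<circ> (phi a :: (rat \<Rightarrow> 'a) \<Rightarrow> 'a poly)"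
  have "?h \<in> ring_iso (monoid_algebra M) ?R'"
    using ring_iso_set_trans[OF i1 ring_iso_set_sym[OF ringR' i2]] .
  moreover have "?h (ma_const c) = ma_const c" for c :: 'a
  proof -
    have "phi a (ma_const c) = [:c:]" "phi b (ma_const c) = [:c:]"
      using h1 h2 by (auto simp: alg_iso_MX_def)
    moreover have "inj_on (phi b) (carrier ?R')" using i2 by (simp add: ring_iso_def bij_betw_def)
    moreover have "ma_const c \<in> carrier ?R'"
    proof -
      have "ma_const c = mono c 0" by (simp add: ma_const_def mono_def fun_eq_iff)
      moreover have "(0::rat) \<in> M'" using b(2) by (auto intro: image_eqI[of _ _ 0])
      ultimately show ?thesis by (simp add: carrier_mono)
    qed
    ultimately show ?thesis using inv_into_f_f[of "phi b" "carrier ?R'" "ma_const c"] by simp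
  qed
  ultimately have "?h \<in> alg_iso_MM M M'" by (simp add: alg_iso_MM_def)
  then show ?thesis using h1 h2 by blast
qed

end
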